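(* Let $0<c<1$, $\beta_1,\dots,\beta_p>0$ with $\beta_i-\beta_j\notin\mathbb Z$ ($i\ne j$), $\vec n\in\mathbb N_0^p$. Let $\mathcal C$ be a positively oriented (counterclockwise) Hankel-type contour that starts and ends at $-\infty$ and encircles the half-line $(-\infty,0]$ exactly once. Then for $x\in\mathbb N_0$ $$M^{(\mathrm{II})}_{2:\vec n}(x;\vec\beta,c)=\Big(\frac{c}{c-1}\Big)^{|\vec n|}\frac{\Gamma(x+1)}{c^x}\int_{\mathcal C}\frac{\Gamma(s)}{(1-c)^s}\frac{\prod_{j=1}^p(\beta_j-s)_{n_j}}{\Gamma(x+s+1)}\frac{ds}{2\pi i}.$$
   Context: Weights $w_i(x)=\frac{\Gamma(\beta_i+x)}{\Gamma(\beta_i)\Gamma(x+1)}c^x$ on $\mathbb N_0$. $M^{(\mathrm{II})}_{2:\vec n}$ is the monic polynomial of degree $|\vec n|$ with $\sum_{k\ge0}k^jM^{(\mathrm{II})}_{2:\vec n}(k)w_i(k)=0$ for $0\le j\le n_i-1$, $1\le i\le p$. $(a)_m$ is the Pochhammer symbol. *)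

theory Defs
  imports "HOL-Complex_Analysis.Complex_Analysis" "HOL-Computational_Algebra.Polynomial"
begin

definition meixner2_weight :: "real \<Rightarrow> real \<Rightarrow> nat \<Rightarrow> real" where
  "meixner2_weight b c k = Gamma (b + real k) / (Gamma b * Gamma (real k + 1)) * c ^ k"

definition is_meixner2_typeII ::
    "nat \<Rightarrow> (nat \<Rightarrow> real) \<Rightarrow> real \<Rightarrow> (nat \<Rightarrow> nat) \<Rightarrow> real poly \<Rightarrow> bool" where
  "is_meixner2_typeII p \<beta> c n P \<longleftrightarrow>
     degree P = (\<Sum>i<p. n i) \<and> lead_coeff P = 1 \<and>
     (\<forall>i<p. \<forall>j<n i.
        (\<lambda>k. real k ^ j * poly P (real k) * meixner2_weight (\<beta> i) c k) sums 0)"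

definition hankel_piece :: "(real \<Rightarrow> complex) \<Rightarrow> real \<Rightarrow> real \<Rightarrow> complex" where
  "hankel_piece \<gamma> T = (\<lambda>u. \<gamma> ((2 * u - 1) * T))"

text \<open>Positively oriented Hankel-type contour: starts (t \<rightarrow> -\<infinity>) and ends (t \<rightarrow> +\<infinity>) at
  Re s = -\<infinity> within a horizontal strip, piecewise smooth, avoids (-\<infinity>,0], and encircles
  every point of (-\<infinity>,0] exactly once counterclockwise (the truncated contour closed
  by the segment from its end point back to its start point eventually has winding
  number 1 around each such point).\<close>
definition hankel_contour :: "(real \<Rightarrow> complex) \<Rightarrow> bool" where
  "hankel_contour \<gamma> \<longleftrightarrow>
     (\<forall>T>0. valid_path (hankel_piece \<gamma> T)) \<and>
     (\<forall>t. \<gamma> t \<notin> complex_of_real ` {..0}) \<and>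
     filterlim (\<lambda>t. Re (\<gamma> t)) at_bot at_top \<and>
     filterlim (\<lambda>t. Re (\<gamma> t)) at_bot at_bot \<and>
     bounded (range (\<lambda>t. Im (\<gamma> t))) \<and>
     (\<forall>z::real. z \<le> 0 \<longrightarrow>
        eventually (\<lambda>T. winding_number (hankel_piece \<gamma> T +++ linepath (\<gamma> T) (\<gamma> (-T)))
                         (complex_of_real z) = 1) at_top)"

end

theory Submission
  imports Defs "HOL-Real_Asymp.Real_Asymp"
begin



definition lpoly :: "(nat \<Rightarrow> real) \<Rightarrow> nat \<Rightarrow> real poly" where
  "lpoly a m = (\<Prod>l<m. [:a l, 1:])"

lemma poly_lpoly: "poly (lpoly a m) y = (\<Prod>l<m. a l + y)"
  unfolding lpoly_def by (simp add: poly_prod)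

lemma degree_lpoly: "degree (lpoly a m) = m"
  unfolding lpoly_def by (subst degree_prod_eq_sum_degree) auto

lemma coeff_lpoly: "coeff (lpoly a m) m = 1"
proof -
  have "lead_coeff (lpoly a m) = 1" unfolding lpoly_def by (simp add: lead_coeff_prod)
  then show ?thesis by (simp add: degree_lpoly)
qed

definition ff :: "real \<Rightarrow> nat \<Rightarrow> real" where
  "ff y m = (\<Prod>l<m. y - real l)"

lemma ff_poly: "ff y m = poly (lpoly (\<lambda>l. - real l) m) y"
  by (simp add: poly_lpoly ff_def)

lemma ff_Suc: "ff y (Suc m) = ff y m * (y - real m)"
  by (simp add: ff_def)

lemma ff_nat: "ff (real k) m = (if m \<le> k then fact k / fact (k - m) else 0)"
proof (induction m)
  case 0 then show ?case by (simp add: ff_def)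
next
  case (Suc m)
  show ?case
  proof (cases "Suc m \<le> k")
    case True
    then have e: "k - m = Suc (k - Suc m)" by simp
    have f: "fact (k - m) = real (k - m) * (fact (k - Suc m)::real)"
      by (subst e, simp only: fact_Suc) (simp add: e[symmetric])
    have pos: "real (k - m) > 0" using True by simp
    have "ff (real k) (Suc m) = fact k / fact (k - m) * real (k - m)"
      using Suc.IH True by (simp add: ff_Suc of_nat_diff)
    also have "\<dots> = fact k / fact (k - Suc m)"
      unfolding f using pos by simp
    finally show ?thesis using True by simp
  next
    case False
    then show ?thesis using Suc by (cases "m = k") (auto simp: ff_Suc)
  qed
qed

lemma poch_neg: "pochhammer (- real k) m = (-1)^m * ff (real k) m"
  by (induction m) (auto simp: pochhammer_Suc ff_Suc ff_def algebra_simps)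

lemma poly_lpoly_poch: "poly (lpoly (\<lambda>t. b + real t) j) y = pochhammer (b + y) j"
  by (simp add: poly_lpoly pochhammer_prod atLeast0LessThan algebra_simps)

lemma ff_basis: "degree (Q::real poly) \<le> N \<Longrightarrow>
   \<exists>d. (\<forall>y. poly Q y = (\<Sum>m\<le>N. d m * ff y m)) \<and> d N = coeff Q N"
proof (induction N arbitrary: Q)
  case 0
  then have "\<And>y. poly Q y = coeff Q 0" by (simp add: poly_altdef)
  then show ?case by (intro exI[of _ "\<lambda>_. coeff Q 0"]) (simp add: ff_def)
next
  case (Suc N)
  define a where "a = coeff Q (Suc N)"
  define L where "L = lpoly (\<lambda>l. - real l) (Suc N)"
  define Q' where "Q' = Q - smult a L"
  have "degree Q' \<le> N"
  proof (rule degree_le, intro allI impI)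
    fix i assume "N < i"
    show "coeff Q' i = 0"
    proof (cases "i = Suc N")
      case True then show ?thesis by (simp add: Q'_def a_def L_def coeff_lpoly)
    next
      case False
      then have "Suc N < i" using \<open>N < i\<close> by simp
      then have "coeff Q i = 0" "coeff L i = 0"
        using Suc.prems by (auto intro!: coeff_eq_0 simp: L_def degree_lpoly)
      then show ?thesis by (simp add: Q'_def)
    qed
  qed
  from Suc.IH[OF this] obtain d' where d': "\<forall>y. poly Q' y = (\<Sum>m\<le>N. d' m * ff y m)" by blast
  define d where "d = d'(Suc N := a)"
  have "poly Q y = (\<Sum>m\<le>Suc N. d m * ff y m)" for y
  proof -
    have "poly Q y = poly Q' y + a * ff y (Suc N)"
      by (simp add: Q'_def L_def ff_poly)
    also have "\<dots> = (\<Sum>m\<le>N. d m * ff y m) + d (Suc N) * ff y (Suc N)"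
      using d' by (simp add: d_def)
    finally show ?thesis by simp
  qed
  then show ?case by (intro exI[of _ d]) (simp add: d_def a_def)
qed

lemma weight_eq: "b > 0 \<Longrightarrow> meixner2_weight b c k = pochhammer b k / fact k * c ^ k"
proof -
  assume b: "b > 0"
  then have "b \<notin> \<int>\<^sub>\<le>\<^sub>0" using nonpos_Ints_nonpos by force
  then have "pochhammer b k = Gamma (b + real k) / Gamma b" by (simp add: pochhammer_Gamma)
  moreover have "Gamma (real k + 1) = fact k" using Gamma_fact[of k] by (simp add: add.commute)
  ultimately show ?thesis by (simp add: meixner2_weight_def)
qed

lemma series_ff:
  assumes b: "0 < b" and c: "0 < c" "c < 1"
  shows "(\<lambda>k. meixner2_weight b c k * ff (real k) m) sums
           (c ^ m * pochhammer b m * (1 - c) powr (-(b + real m)))"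
proof -
  have "(\<lambda>l. ((-(b + real m)) gchoose l) * (- c) ^ l) sums (1 + - c) powr (-(b + real m))"
    by (rule gen_binomial_real) (use c in auto)
  moreover have "((-(b + real m)) gchoose l) * (- c) ^ l = pochhammer (b + real m) l / fact l * c ^ l" for l
  proof -
    have g: "((-(b + real m)) gchoose l) = (-1)^l * pochhammer (b + real m) l / fact l"
      by (simp add: gbinomial_pochhammer add.commute)
    have pm: "(- c) ^ l = (-1)^l * c ^ l" by (rule power_minus)
    have ss: "(-1::real)^l * (-1)^l = 1" by (simp flip: power_add)
    have "\<And>s X F C :: real. s * s = 1 \<Longrightarrow> s * X / F * (s * C) = X / F * C"
      by (simp add: algebra_simps)
    from this[OF ss] show ?thesis unfolding g pm .
  qed
  ultimately have bin: "(\<lambda>l. pochhammer (b + real m) l / fact l * c ^ l) sums (1 - c) powr (-(b + real m))"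
    by simp
  define f where "f k = meixner2_weight b c k * ff (real k) m" for k
  have shift: "f (l + m) = c ^ m * pochhammer b m * (pochhammer (b + real m) l / fact l * c ^ l)" for l
  proof -
    have "pochhammer b (l + m) = pochhammer b m * pochhammer (b + real m) l"
      using pochhammer_product[of m "l + m" b] by simp
    moreover have "ff (real (l + m)) m = fact (l + m) / fact l" by (subst ff_nat) simp
    moreover have "(fact (l + m) :: real) \<noteq> 0" by simp
    moreover have "\<And>A B F L Cm Cl :: real. F \<noteq> 0 \<Longrightarrow>
        A * B / F * (Cl * Cm) * (F / L) = Cm * A * (B / L * Cl)" by (simp add: field_simps)
    ultimately show ?thesis using b
      by (simp add: f_def weight_eq power_add)
  qed
  have sh: "(\<lambda>l. f (l + m)) sums (c ^ m * pochhammer b m * (1 - c) powr (-(b + real m)))"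
    unfolding shift by (rule sums_mult[OF bin])
  have z: "\<And>i. i < m \<Longrightarrow> f i = 0" by (simp add: f_def ff_nat)
  have "f sums (c ^ m * pochhammer b m * (1 - c) powr (-(b + real m)))"
    using sh sums_zero_iff_shift[of m f, OF z] by blast
  moreover have "f = (\<lambda>k. meixner2_weight b c k * ff (real k) m)" by (simp add: fun_eq_iff f_def)
  ultimately show ?thesis by simp
qed


lemma series_P:
  assumes d: "\<forall>y. poly P y = (\<Sum>m\<le>N. d m * ff y m)" and b: "0 < b" and c: "0 < c" "c < 1"
  shows "(\<lambda>k. meixner2_weight b c k * poly P (real k)) sums
           ((1 - c) powr (-b) * (\<Sum>m\<le>N. d m * (c / (1 - c)) ^ m * pochhammer b m))"
proof -
  have s: "(\<lambda>k. \<Sum>m\<le>N. d m * (meixner2_weight b c k * ff (real k) m)) sums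
        (\<Sum>m\<le>N. d m * (c ^ m * pochhammer b m * (1 - c) powr (-(b + real m))))"
    by (intro sums_sum sums_mult series_ff b c)
  have e1: "(\<Sum>m\<le>N. d m * (meixner2_weight b c k * ff (real k) m)) = meixner2_weight b c k * poly P (real k)" for k
    using d by (simp add: sum_distrib_left mult_ac)
  have e2: "d m * (c ^ m * pochhammer b m * (1 - c) powr (-(b + real m))) =
        (1 - c) powr (-b) * (d m * (c / (1 - c)) ^ m * pochhammer b m)" for m
  proof -
    have "(1 - c) powr (-(b + real m)) = (1 - c) powr (-b) * (1 - c) powr (- real m)"
      by (subst powr_add[symmetric]) simp
    moreover have "(1 - c) powr (- real m) = 1 / (1 - c) ^ m"
      using c by (simp add: powr_minus_divide powr_realpow)
    ultimately show ?thesis by (simp add: power_divide)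
  qed
  show ?thesis using s unfolding e1 e2 by (simp add: sum_distrib_left)
qed

lemma orth_shift:
  assumes orth: "\<forall>j'<nn. (\<lambda>k. real k ^ j' * poly P (real k) * meixner2_weight b c k) sums 0"
    and j: "j < nn" and b: "0 < b"
  shows "(\<lambda>k. meixner2_weight (b + real j) c k * poly P (real k)) sums 0"
proof -
  define q where "q = lpoly (\<lambda>t. b + real t) j"
  have dq: "degree q = j" by (simp add: q_def degree_lpoly)
  have "(\<lambda>k. \<Sum>l\<le>j. coeff q l * (real k ^ l * poly P (real k) * meixner2_weight b c k)) sums
          (\<Sum>l\<le>j. coeff q l * 0)"
    using orth j by (intro sums_sum sums_mult) auto
  moreover have "(\<Sum>l\<le>j. coeff q l * (real k ^ l * poly P (real k) * meixner2_weight b c k))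
       = poly q (real k) * poly P (real k) * meixner2_weight b c k" for k
    unfolding poly_altdef[of q] dq by (simp add: sum_distrib_left mult_ac)
  ultimately have s1: "(\<lambda>k. poly q (real k) * poly P (real k) * meixner2_weight b c k) sums 0"
    by simp
  have eq: "poly q (real k) * poly P (real k) * meixner2_weight b c k =
      pochhammer b j * (meixner2_weight (b + real j) c k * poly P (real k))" for k
  proof -
    have pp: "pochhammer b k * pochhammer (b + real k) j = pochhammer b j * pochhammer (b + real j) k"
      using pochhammer_product[of k "k+j" b] pochhammer_product[of j "k+j" b] by (simp add: add.commute)
    have ab: "\<And>X Y Z W Pp F C :: real. X * Y = Z * W \<Longrightarrow> Y * Pp * (X / F * C) = Z * (W / F * C * Pp)"
      by (auto simp: field_simps)
    have bj: "b + real j > 0" using b by simp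
    show ?thesis
      unfolding q_def poly_lpoly_poch weight_eq[OF b] weight_eq[OF bj] by (rule ab[OF pp])
  qed
  have "(\<lambda>k. (1 / pochhammer b j) * (pochhammer b j * (meixner2_weight (b + real j) c k * poly P (real k)))) sums ((1 / pochhammer b j) * 0)"
    using s1 unfolding eq by (rule sums_mult)
  moreover have "pochhammer b j > 0" using b by (rule pochhammer_pos)
  ultimately show ?thesis by simp
qed

lemma Phi_zero:
  assumes d: "\<forall>y. poly P y = (\<Sum>m\<le>N. d m * ff y m)" and b: "0 < b" and c: "0 < c" "c < 1"
    and s: "(\<lambda>k. meixner2_weight b c k * poly P (real k)) sums 0"
  shows "(\<Sum>m\<le>N. d m * (c / (1 - c)) ^ m * pochhammer b m) = 0"
proof -
  have "(1 - c) powr (-b) * (\<Sum>m\<le>N. d m * (c / (1 - c)) ^ m * pochhammer b m) = 0"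
    using sums_unique2[OF series_P[OF d b c] s] .
  moreover have "(1 - c) powr (-b) > 0" using c by simp
  ultimately show ?thesis by simp
qed

lemma poly_roots_eq:
  fixes F G :: "real poly"
  assumes "degree F \<le> N" "degree G \<le> N" "coeff F N = coeff G N" "finite T" "card T = N"
    "\<forall>t\<in>T. poly F t = 0 \<and> poly G t = 0"
  shows "F = G"
proof (rule ccontr)
  assume ne: "F \<noteq> G"
  define D where "D = F - G"
  have D0: "D \<noteq> 0" using ne by (simp add: D_def)
  have dD: "degree D \<le> N" using assms(1,2) degree_diff_le by (simp add: D_def)
  have "coeff D N = 0" using assms(3) by (simp add: D_def)
  then have "degree D \<noteq> N" using D0 by auto
  with dD have lt: "degree D < N" by simp
  have "T \<subseteq> {x. poly D x = 0}" using assms(6) by (auto simp: D_def)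
  then have "card T \<le> card {x. poly D x = 0}"
    by (rule card_mono[OF poly_roots_finite[OF D0]])
  also have "\<dots> \<le> degree D" by (rule card_poly_roots_bound[OF D0])
  finally show False using lt assms(5) by simp
qed

lemma binom_ff_sum:
  "(\<Sum>k\<le>x. real (x choose k) * z ^ k * ff (real k) m) = ff (real x) m * z ^ m * (1 + z) ^ (x - m)"
proof (cases "m \<le> x")
  case False
  then show ?thesis by (auto simp: ff_nat intro!: sum.neutral)
next
  case True
  have split: "{..x} = {..<m} \<union> {m..x}" using True by auto
  have "(\<Sum>k\<le>x. real (x choose k) * z ^ k * ff (real k) m)
      = (\<Sum>k\<in>{m..x}. real (x choose k) * z ^ k * ff (real k) m)"
    unfolding split by (subst sum.union_disjoint) (auto simp: ff_nat intro!: sum.neutral)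
  also have "\<dots> = (\<Sum>l=0..x-m. real (x choose (l + m)) * z ^ (l + m) * ff (real (l + m)) m)"
    using sum.shift_bounds_cl_nat_ivl[of "\<lambda>k. real (x choose k) * z ^ k * ff (real k) m" 0 m "x - m"] True
    by simp
  also have "\<dots> = (\<Sum>l=0..x-m. (fact x / fact (x - m)) * z ^ m * (real ((x - m) choose l) * z ^ l))"
  proof (rule sum.cong[OF refl])
    fix l assume l: "l \<in> {0..x-m}"
    then have l1: "l + m \<le> x" and l2: "l \<le> x - m" using True by auto
    have a: "real (x choose (l + m)) = fact x / (fact (l + m) * fact (x - (l + m)))"
      using binomial_fact[OF l1] by simp
    have b: "real ((x - m) choose l) = fact (x - m) / (fact l * fact (x - m - l))"
      using binomial_fact[OF l2] by simp
    have f: "ff (real (l + m)) m = fact (l + m) / fact l" by (subst ff_nat) simp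
    have e: "x - (l + m) = x - m - l" by simp
    have nz: "(fact (l + m)::real) \<noteq> 0" "(fact (x - m)::real) \<noteq> 0" by simp_all
    show "real (x choose (l + m)) * z ^ (l + m) * ff (real (l + m)) m =
          (fact x / fact (x - m)) * z ^ m * (real ((x - m) choose l) * z ^ l)"
      unfolding a b f e using nz by (simp add: power_add field_simps)
  qed
  also have "\<dots> = (fact x / fact (x - m)) * z ^ m * (\<Sum>l=0..x-m. real ((x - m) choose l) * z ^ l)"
    by (simp add: sum_distrib_left)
  also have "(\<Sum>l=0..x-m. real ((x - m) choose l) * z ^ l) = (z + 1) ^ (x - m)"
    by (simp add: binomial_ring atLeast0AtMost)
  finally show ?thesis using True by (simp add: ff_nat add.commute)
qed


lemma poly_lpoly_poch0: "poly (lpoly real m) y = pochhammer y m"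
  using poly_lpoly_poch[of 0 m y] by simp

lemma partB:
  assumes c: "0 < c" "c < 1"
    and \<beta>pos: "\<And>i. i < p \<Longrightarrow> \<beta> i > 0"
    and \<beta>nonint: "\<And>i j. i < p \<Longrightarrow> j < p \<Longrightarrow> i \<noteq> j \<Longrightarrow> \<beta> i - \<beta> j \<notin> \<int>"
    and P: "is_meixner2_typeII p \<beta> c n P"
  shows "poly P (real x) = (c / (c - 1)) ^ (\<Sum>i<p. n i) * (fact x / c ^ x) *
     (\<Sum>k\<le>x. (\<Prod>j<p. pochhammer (\<beta> j + real k) (n j)) * (c - 1) ^ k / (fact k * fact (x - k)))"
proof -
  define N where "N = (\<Sum>i<p. n i)"
  have degP: "degree P = N" and lc: "lead_coeff P = 1"
    and orth: "\<And>i. i < p \<Longrightarrow> \<forall>j<n i. (\<lambda>k. real k ^ j * poly P (real k) * meixner2_weight (\<beta> i) c k) sums 0"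
    using P unfolding is_meixner2_typeII_def N_def by auto
  obtain d where d: "\<forall>y. poly P y = (\<Sum>m\<le>N. d m * ff y m)" and dN: "d N = 1"
    using ff_basis[of P N] degP lc by auto
  define r where "r = c / (1 - c)"
  have r0: "r \<noteq> 0" using c by (simp add: r_def)
  define S where "S = Sigma {..<p} (\<lambda>i. {..<n i})"
  define h where "h = (\<lambda>(i, j). \<beta> i + real j)"
  define T where "T = h ` S"
  have finS: "finite S" by (simp add: S_def)
  have cardS: "card S = N" by (simp add: S_def N_def card_SigmaI)
  have inj: "inj_on h S"
  proof (rule inj_onI)
    fix u v assume u: "u \<in> S" and v: "v \<in> S" and huv: "h u = h v"
    obtain i j where u': "u = (i, j)" by force
    obtain i' j' where v': "v = (i', j')" by force
    have i: "i < p" "j < n i" and i': "i' < p" "j' < n i'" using u v by (auto simp: S_def u' v')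
    have eq: "\<beta> i + real j = \<beta> i' + real j'" using huv by (simp add: h_def u' v')
    have "i = i'"
    proof (rule ccontr)
      assume "i \<noteq> i'"
      then have "\<beta> i - \<beta> i' \<notin> \<int>" using \<beta>nonint i i' by blast
      moreover have "\<beta> i - \<beta> i' = of_int (int j' - int j)" using eq by simp
      ultimately show False by (metis Ints_of_int)
    qed
    with eq show "u = v" by (simp add: u' v')
  qed
  have finT: "finite T" by (simp add: T_def finS)
  have cardT: "card T = N" using card_image[OF inj] cardS by (simp add: T_def)
  define Fp where "Fp = (\<Sum>m\<le>N. smult (d m * r ^ m) (lpoly real m))"
  define Gp where "Gp = smult (r ^ N) (\<Prod>t\<in>T. [:- t, 1:])"
  have polyF: "poly Fp y = (\<Sum>m\<le>N. d m * r ^ m * pochhammer y m)" for y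
    by (simp add: Fp_def poly_sum poly_lpoly_poch0)
  have polyG: "poly Gp y = r ^ N * (\<Prod>t\<in>T. y - t)" for y
    by (simp add: Gp_def poly_prod)
  have degF: "degree Fp \<le> N"
  proof (rule degree_le, intro allI impI)
    fix i assume "N < i"
    then have "\<forall>m\<le>N. coeff (lpoly real m) i = 0"
      by (auto intro!: coeff_eq_0 simp: degree_lpoly)
    then show "coeff Fp i = 0" by (simp add: Fp_def coeff_sum)
  qed
  have cF: "coeff Fp N = r ^ N"
  proof -
    have "coeff Fp N = (\<Sum>m<Suc N. d m * r ^ m * coeff (lpoly real m) N)"
      by (simp add: Fp_def coeff_sum lessThan_Suc_atMost)
    also have "\<dots> = (\<Sum>m<N. d m * r ^ m * coeff (lpoly real m) N) + d N * r ^ N"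
      by (simp add: coeff_lpoly)
    also have "(\<Sum>m<N. d m * r ^ m * coeff (lpoly real m) N) = 0"
      by (auto intro!: sum.neutral coeff_eq_0 simp: degree_lpoly)
    finally show ?thesis by (simp add: dN)
  qed
  have lin: "\<forall>t\<in>T. [:- t, 1:] \<noteq> (0::real poly)" by simp
  have degG: "degree Gp = N"
    using r0 cardT by (simp add: Gp_def degree_prod_eq_sum_degree[OF lin])
  have cG: "coeff Gp N = r ^ N"
  proof -
    have "lead_coeff (\<Prod>t\<in>T. [:- t, 1:]) = (1::real)" by (simp add: lead_coeff_prod)
    moreover have "degree (\<Prod>t\<in>T. [:- t, 1:]) = N"
      using cardT by (simp add: degree_prod_eq_sum_degree[OF lin])
    ultimately show ?thesis by (simp add: Gp_def)
  qed
  have rootsF: "poly Fp t = 0" if t: "t \<in> T" for t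
  proof -
    obtain i j where ij: "i < p" "j < n i" "t = \<beta> i + real j"
      using t by (auto simp: T_def S_def h_def)
    have "(\<lambda>k. meixner2_weight (\<beta> i + real j) c k * poly P (real k)) sums 0"
      by (rule orth_shift[OF orth[OF ij(1)] ij(2) \<beta>pos[OF ij(1)]])
    then have "(\<Sum>m\<le>N. d m * (c / (1 - c)) ^ m * pochhammer (\<beta> i + real j) m) = 0"
      using \<beta>pos[OF ij(1)] c by (intro Phi_zero[OF d]) auto
    then show ?thesis by (simp add: polyF ij(3) r_def)
  qed
  have rootsG: "poly Gp t = 0" if t: "t \<in> T" for t
    using t finT by (simp add: polyG prod_zero_iff)
  have FG: "Fp = Gp"
    by (rule poly_roots_eq[OF degF _ _ finT cardT]) (use degG cF cG rootsF rootsG in auto)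
  define Q where "Q k = (\<Prod>j<p. pochhammer (\<beta> j + real k) (n j))" for k :: nat
  have key: "Q k = (\<Sum>m\<le>N. d m * (-r) ^ m * ff (real k) m) / (-r) ^ N" for k
  proof -
    have "poly Fp (- real k) = (\<Sum>m\<le>N. d m * r ^ m * ((-1) ^ m * ff (real k) m))"
      unfolding polyF poch_neg ..
    also have "\<dots> = (\<Sum>m\<le>N. d m * (-r) ^ m * ff (real k) m)"
    proof (rule sum.cong[OF refl])
      fix m
      have "(-r) ^ m = (-1) ^ m * r ^ m" by (rule power_minus)
      then show "d m * r ^ m * ((-1) ^ m * ff (real k) m) = d m * (-r) ^ m * ff (real k) m"
        by simp
    qed
    finally have F1: "poly Fp (- real k) = (\<Sum>m\<le>N. d m * (-r) ^ m * ff (real k) m)" .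
    have "(\<Prod>t\<in>T. - real k - t) = (\<Prod>s\<in>S. - real k - h s)"
      unfolding T_def by (rule prod.reindex[OF inj, unfolded comp_def])
    also have "\<dots> = (\<Prod>s\<in>S. - (real k + h s))" by (intro prod.cong) auto
    also have "\<dots> = (-1) ^ N * (\<Prod>s\<in>S. real k + h s)" by (simp only: prod_uminus cardS)
    also have "(\<Prod>s\<in>S. real k + h s) = (\<Prod>(i, j)\<in>S. real k + h (i, j))"
      by (intro prod.cong refl) (simp add: case_prod_unfold)
    also have "\<dots> = (\<Prod>i<p. \<Prod>j<n i. real k + h (i, j))"
      unfolding S_def by (rule prod.Sigma[symmetric]) auto
    also have "\<dots> = Q k"
      unfolding Q_def h_def pochhammer_prod atLeast0LessThan by (intro prod.cong refl) (simp add: algebra_simps)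
    finally have "(\<Prod>t\<in>T. - real k - t) = (-1) ^ N * Q k" .
    then have G1: "poly Gp (- real k) = (-r) ^ N * Q k"
      unfolding polyG by (simp add: power_minus[of r])
    have "(-r) ^ N * Q k = (\<Sum>m\<le>N. d m * (-r) ^ m * ff (real k) m)"
      using FG F1 G1 by simp
    moreover have "(-r) ^ N \<noteq> 0" using r0 by simp
    ultimately show ?thesis by (simp add: eq_divide_eq mult.commute)
  qed
  have inner: "(\<Sum>k\<le>x. real (x choose k) * (c - 1) ^ k * ff (real k) m) = ff (real x) m * ((c - 1) / c) ^ m * c ^ x" for m
  proof (cases "m \<le> x")
    case True
    have cx: "c ^ (x - m) = c ^ x / c ^ m" using c True by (simp add: power_diff)
    have "(\<Sum>k\<le>x. real (x choose k) * (c - 1) ^ k * ff (real k) m) = ff (real x) m * (c - 1) ^ m * (1 + (c - 1)) ^ (x - m)"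
      by (rule binom_ff_sum)
    also have "\<dots> = ff (real x) m * (c - 1) ^ m * (c ^ x / c ^ m)" using cx by simp
    also have "\<dots> = ff (real x) m * ((c - 1) / c) ^ m * c ^ x" by (simp add: power_divide)
    finally show ?thesis .
  next
    case False
    then show ?thesis using binom_ff_sum[of x "c - 1" m] by (simp add: ff_nat)
  qed
  have fx0: "(fact x :: real) \<noteq> 0" by simp
  have ab1: "\<And>F A B C Qv :: real. F \<noteq> 0 \<Longrightarrow> F / (A * B) * C * Qv / F = Qv * C / (A * B)"
    by (simp add: field_simps)
  have "(\<Sum>k\<le>x. Q k * (c - 1) ^ k / (fact k * fact (x - k)))
      = (\<Sum>k\<le>x. real (x choose k) * (c - 1) ^ k * Q k / fact x)"
  proof (rule sum.cong[OF refl])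
    fix k assume "k \<in> {..x}"
    then have "k \<le> x" by simp
    then show "Q k * (c - 1) ^ k / (fact k * fact (x - k)) = real (x choose k) * (c - 1) ^ k * Q k / fact x"
      unfolding binomial_fact[OF \<open>k \<le> x\<close>] using ab1[OF fx0] by simp
  qed
  also have "\<dots> = (\<Sum>k\<le>x. real (x choose k) * (c - 1) ^ k * Q k) / fact x"
    by (simp add: sum_divide_distrib)
  also have "(\<Sum>k\<le>x. real (x choose k) * (c - 1) ^ k * Q k)
      = (\<Sum>k\<le>x. \<Sum>m\<le>N. (d m * (-r) ^ m / (-r) ^ N) * (real (x choose k) * (c - 1) ^ k * ff (real k) m))"
  proof (rule sum.cong[OF refl])
    fix k
    show "real (x choose k) * (c - 1) ^ k * Q k
       = (\<Sum>m\<le>N. (d m * (-r) ^ m / (-r) ^ N) * (real (x choose k) * (c - 1) ^ k * ff (real k) m))"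
      unfolding key sum_divide_distrib sum_distrib_left
      by (intro sum.cong refl) (simp add: divide_inverse mult_ac)
  qed
  also have "\<dots> = (\<Sum>m\<le>N. (d m * (-r) ^ m / (-r) ^ N) * (\<Sum>k\<le>x. real (x choose k) * (c - 1) ^ k * ff (real k) m))"
    by (subst sum.swap) (simp add: sum_distrib_left)
  also have "\<dots> = (\<Sum>m\<le>N. (d m * (-r) ^ m / (-r) ^ N) * (ff (real x) m * ((c - 1) / c) ^ m * c ^ x))"
    unfolding inner ..
  also have "\<dots> = c ^ x / (-r) ^ N * (\<Sum>m\<le>N. d m * ff (real x) m * ((-r) * ((c - 1) / c)) ^ m)"
    unfolding sum_distrib_left power_mult_distrib
    by (intro sum.cong refl) (simp add: divide_inverse mult_ac)
  also have "(-r) * ((c - 1) / c) = 1" using c by (simp add: r_def field_simps)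
  finally have sumeq: "(\<Sum>k\<le>x. Q k * (c - 1) ^ k / (fact k * fact (x - k))) = c ^ x / (-r) ^ N * poly P (real x) / fact x"
    using d by simp
  have cc: "(c / (c - 1)) / (-r) = 1" using c by (simp add: r_def field_simps)
  have ab2: "\<And>A B X F Pv :: real. X \<noteq> 0 \<Longrightarrow> F \<noteq> 0 \<Longrightarrow>
      A ^ N * (F / X) * (X / B ^ N * Pv / F) = (A / B) ^ N * Pv"
    by (simp add: power_divide)
  have "(c / (c - 1)) ^ N * (fact x / c ^ x) * (c ^ x / (-r) ^ N * poly P (real x) / fact x)
      = ((c / (c - 1)) / (-r)) ^ N * poly P (real x)"
    using c fx0 by (intro ab2) auto
  also have "\<dots> = poly P (real x)" unfolding cc by simp
  finally show ?thesis using sumeq by (simp add: N_def Q_def)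
qed


definition hfun :: "nat \<Rightarrow> (nat \<Rightarrow> real) \<Rightarrow> real \<Rightarrow> (nat \<Rightarrow> nat) \<Rightarrow> complex \<Rightarrow> complex" where
  "hfun p \<beta> c n s = (\<Prod>j<p. pochhammer (complex_of_real (\<beta> j) - s) (n j)) / complex_of_real (1 - c) powr s"

definition gfun :: "nat \<Rightarrow> (nat \<Rightarrow> real) \<Rightarrow> real \<Rightarrow> (nat \<Rightarrow> nat) \<Rightarrow> nat \<Rightarrow> complex \<Rightarrow> complex" where
  "gfun p \<beta> c n x s = hfun p \<beta> c n s / pochhammer s (Suc x)"

lemma integrand_eq:
  assumes "s \<notin> \<int>\<^sub>\<le>\<^sub>0"
  shows "Gamma s / (complex_of_real (1 - c)) powr s * (\<Prod>j<p. pochhammer (complex_of_real (\<beta> j) - s) (n j))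
           / Gamma (of_nat x + s + 1) = gfun p \<beta> c n x s"
proof -
  have G0: "Gamma s \<noteq> 0" using assms by (simp add: Gamma_eq_zero_iff)
  have "pochhammer s (Suc x) = Gamma (s + of_nat (Suc x)) / Gamma s"
    using assms by (rule pochhammer_Gamma)
  then have e: "Gamma (of_nat x + s + 1) = pochhammer s (Suc x) * Gamma s"
    using G0 by (simp add: add_ac)
  have ab: "\<And>G W Pr Po :: complex. G \<noteq> 0 \<Longrightarrow> G / W * Pr / (Po * G) = Pr / W / Po"
    by (simp add: field_simps)
  show ?thesis unfolding e gfun_def hfun_def using ab[OF G0] by simp
qed

lemma powr_nonzero_c: "c < 1 \<Longrightarrow> complex_of_real (1 - c) powr s \<noteq> 0"
  by (simp add: powr_def)

lemma hfun_holo: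
  assumes "c < 1"
  shows "hfun p \<beta> c n holomorphic_on S"
proof -
  have "(\<lambda>s. (\<Prod>j<p. pochhammer (complex_of_real (\<beta> j) - s) (n j)) / complex_of_real (1 - c) powr s) holomorphic_on S"
    unfolding pochhammer_prod
    by (intro holomorphic_intros holomorphic_on_powr_right) (use assms powr_nonzero_c in auto)
  then show ?thesis unfolding hfun_def[abs_def] .
qed

definition pts :: "nat \<Rightarrow> complex set" where
  "pts x = (\<lambda>k. - of_nat k) ` {..x}"

lemma poch_nz: "s \<notin> pts x \<Longrightarrow> pochhammer s (Suc x) \<noteq> 0"
  by (auto simp: pts_def pochhammer_eq_0_iff less_Suc_eq_le)

lemma gfun_holo:
  assumes "c < 1"
  shows "gfun p \<beta> c n x holomorphic_on (UNIV - pts x)"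
proof -
  have "(\<lambda>s. hfun p \<beta> c n s / pochhammer s (Suc x)) holomorphic_on (UNIV - pts x)"
    unfolding pochhammer_prod
    by (intro holomorphic_intros hfun_holo[OF assms])
       (use poch_nz in \<open>auto simp: pochhammer_prod\<close>)
  then show ?thesis unfolding gfun_def[abs_def] .
qed

lemma finite_pts: "finite (pts x)" by (simp add: pts_def)

lemma open_pts: "open (UNIV - pts x)"
  by (simp add: finite_pts finite_imp_closed open_Diff)

lemma prod_remove_eq:
  "(\<Prod>m\<in>{..x} - {k}. (of_nat m - of_nat k :: complex)) = (-1) ^ k * fact k * fact (x - k)"
  if assms: "k \<le> x" for k x :: nat
proof -
  have split: "{..x} - {k} = {..<k} \<union> {Suc k..x}" using assms by auto
  have p1: "(\<Prod>m<k. (of_nat m - of_nat k :: complex)) = (-1) ^ k * fact k"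
  proof -
    have "(\<Prod>m<k. (of_nat m - of_nat k :: complex)) = (\<Prod>m<k. - of_nat (k - m))"
      by (intro prod.cong refl) (simp add: of_nat_diff)
    also have "\<dots> = (-1) ^ k * (\<Prod>m<k. of_nat (k - m))" by (simp only: prod_uminus card_lessThan)
    also have "(\<Prod>m<k. of_nat (k - m) :: complex) = fact k"
      by (simp add: fact_prod_rev atLeast0LessThan of_nat_prod)
    finally show ?thesis .
  qed
  have p2: "(\<Prod>m\<in>{Suc k..x}. (of_nat m - of_nat k :: complex)) = fact (x - k)"
  proof -
    have "(\<Prod>m\<in>{Suc k..x}. (of_nat m - of_nat k :: complex)) = (\<Prod>m\<in>{Suc k..x}. of_nat (m - k))"
      by (intro prod.cong refl) (simp add: of_nat_diff)
    also have "\<dots> = (\<Prod>i\<in>{1..x-k}. of_nat ((i + k) - k))"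
      using prod.shift_bounds_cl_nat_ivl[of "\<lambda>m. of_nat (m - k) :: complex" 1 k "x - k"] assms by simp
    also have "\<dots> = fact (x - k)"
      by (simp add: fact_prod of_nat_prod)
    finally show ?thesis .
  qed
  show ?thesis unfolding split
    by (subst prod.union_disjoint) (auto simp: p1 p2)
qed

lemma residue_gfun:
  assumes c: "c < 1" and k: "k \<le> x"
  shows "residue (gfun p \<beta> c n x) (- of_nat k) =
     hfun p \<beta> c n (- of_nat k) / ((-1) ^ k * fact k * fact (x - k))"
proof -
  define R where "R w = (\<Prod>m\<in>{..x} - {k}. w + of_nat m)" for w :: complex
  define U where "U = UNIV - (\<lambda>m. - of_nat m :: complex) ` ({..x} - {k})"
  have U: "open U" unfolding U_def by (intro open_Diff finite_imp_closed) auto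
  have kU: "- of_nat k \<in> U" by (auto simp: U_def)
  have Rnz: "R w \<noteq> 0" if wU: "w \<in> U" for w
  proof -
    have "\<forall>m\<in>{..x}-{k}. w + of_nat m \<noteq> 0"
    proof
      fix m assume m: "m \<in> {..x}-{k}"
      show "w + of_nat m \<noteq> 0"
      proof
        assume "w + of_nat m = 0"
        then have "w = - of_nat m" by (simp add: add_eq_0_iff)
        with m wU show False by (auto simp: U_def)
      qed
    qed
    then show ?thesis by (simp add: R_def)
  qed
  have holo: "(\<lambda>w. hfun p \<beta> c n w / R w) holomorphic_on U"
    unfolding R_def by (intro holomorphic_intros hfun_holo[OF c]) (use Rnz in \<open>auto simp: R_def\<close>)
  have eq: "gfun p \<beta> c n x = (\<lambda>w. hfun p \<beta> c n w / R w / (w - (- of_nat k)))"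
  proof
    fix w :: complex
    have "pochhammer w (Suc x) = (\<Prod>m\<in>{..x}. w + of_nat m)"
      by (simp add: pochhammer_prod atLeast0LessThan lessThan_Suc_atMost)
    also have "\<dots> = (w + of_nat k) * R w"
      unfolding R_def using k by (subst prod.remove[of _ k]) auto
    finally show "gfun p \<beta> c n x w = hfun p \<beta> c n w / R w / (w - (- of_nat k))"
      by (simp add: gfun_def divide_divide_eq_left mult.commute)
  qed
  have "residue (gfun p \<beta> c n x) (- of_nat k) = hfun p \<beta> c n (- of_nat k) / R (- of_nat k)"
    unfolding eq by (rule residue_simple[OF U kU holo])
  also have "R (- of_nat k) = (-1) ^ k * fact k * fact (x - k)"
    unfolding R_def using prod_remove_eq[OF k] by (simp add: algebra_simps)
  finally show ?thesis .
qed

lemma hfun_at: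
  assumes c: "c < 1"
  shows "hfun p \<beta> c n (- of_nat k) = of_real ((\<Prod>j<p. pochhammer (\<beta> j + real k) (n j)) * (1 - c) ^ k)"
proof -
  have "complex_of_real (1 - c) powr (- of_nat k) = complex_of_real (1 - c) powr complex_of_real (- real k)"
    by simp
  also have "\<dots> = of_real ((1 - c) powr (- real k))" using c by (intro powr_of_real) auto
  also have "(1 - c) powr (- real k) = 1 / (1 - c) ^ k" using c by (simp add: powr_minus_divide powr_realpow)
  finally have pw: "complex_of_real (1 - c) powr (- of_nat k) = of_real (1 / (1 - c) ^ k)" .
  have pr: "(\<Prod>j<p. pochhammer (complex_of_real (\<beta> j) - (- of_nat k)) (n j))
        = of_real (\<Prod>j<p. pochhammer (\<beta> j + real k) (n j))"
    by (simp add: pochhammer_of_real[symmetric])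
  show ?thesis unfolding hfun_def pw pr using c by (simp add: field_simps)
qed


lemma norm_poch_le: "norm (pochhammer (z::complex) m) \<le> (norm z + real m) ^ m"
proof -
  have "norm (pochhammer z m) \<le> (\<Prod>l\<in>{0..<m}. norm (z + of_nat l))"
    unfolding pochhammer_prod by (rule norm_prod_le)
  also have "\<dots> \<le> (\<Prod>l\<in>{0..<m}. norm z + real m)"
  proof (rule prod_mono)
    fix l assume "l \<in> {0..<m}"
    then have "norm (z + of_nat l) \<le> norm z + real l" using norm_triangle_ineq[of z "of_nat l"] by simp
    also have "\<dots> \<le> norm z + real m" using \<open>l \<in> {0..<m}\<close> by simp
    finally show "0 \<le> norm (z + of_nat l) \<and> norm (z + of_nat l) \<le> norm z + real m" by simp
  qed
  also have "\<dots> = (norm z + real m) ^ m" by simp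
  finally show ?thesis .
qed

lemma gfun_bound:
  assumes c: "0 < c" "c < 1"
  shows "\<exists>R0. \<forall>s. Re s \<le> - R0 \<longrightarrow> \<bar>Im s\<bar> \<le> M \<longrightarrow>
            norm (gfun p \<beta> c n x s) \<le> exp ((- ln (1 - c) / 2) * Re s)"
proof -
  define lam where "lam = - ln (1 - c)"
  have lam: "lam > 0" using c by (simp add: lam_def)
  define K where "K = (\<Sum>j<p. \<bar>\<beta> j\<bar> + real (n j)) + 1"
  define N where "N = (\<Sum>j<p. n j)"
  have lim: "((\<lambda>u::real. (K + M + u) ^ N * exp (- (lam / 2) * u)) \<longlongrightarrow> 0) at_top"
    using lam by real_asymp
  have "eventually (\<lambda>u. (K + M + u) ^ N * exp (- (lam / 2) * u) < 1) at_top"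
    using order_tendstoD(2)[OF lim] by simp
  then obtain U where U: "\<And>u. u \<ge> U \<Longrightarrow> (K + M + u) ^ N * exp (- (lam / 2) * u) < 1"
    by (auto simp: eventually_at_top_linorder)
  show ?thesis
  proof (intro exI[of _ "max U (real x + 1)"] allI impI)
    fix s :: complex
    assume re: "Re s \<le> - max U (real x + 1)" and im: "\<bar>Im s\<bar> \<le> M"
    define u where "u = - Re s"
    have uU: "u \<ge> U" and ux: "u \<ge> real x + 1" using re by (auto simp: u_def)
    have M0: "M \<ge> 0" using im by linarith
    have ns: "norm s \<le> u + M"
      using cmod_le[of s] im re ux by (auto simp: u_def)
    have P1: "1 \<le> norm (pochhammer s (Suc x))"
    proof -
      have "norm (pochhammer s (Suc x)) = (\<Prod>i\<in>{0..<Suc x}. norm (s + of_nat i))"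
        unfolding pochhammer_prod by (simp add: prod_norm)
      also have "1 \<le> \<dots>"
      proof (rule prod_ge_1)
        fix i assume "i \<in> {0..<Suc x}"
        then have "Re s + real i \<le> -1" using ux by (auto simp: u_def)
        then have "1 \<le> \<bar>Re (s + of_nat i)\<bar>" by simp
        also have "\<dots> \<le> norm (s + of_nat i)" by (rule abs_Re_le_cmod)
        finally show "1 \<le> norm (s + of_nat i)" .
      qed
      finally show ?thesis .
    qed
    have P2: "norm (\<Prod>j<p. pochhammer (complex_of_real (\<beta> j) - s) (n j)) \<le> (K + M + u) ^ N"
    proof -
      have "norm (\<Prod>j<p. pochhammer (complex_of_real (\<beta> j) - s) (n j))
          \<le> (\<Prod>j<p. norm (pochhammer (complex_of_real (\<beta> j) - s) (n j)))"
        by (rule norm_prod_le)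
      also have "\<dots> \<le> (\<Prod>j<p. (K + M + u) ^ n j)"
      proof (rule prod_mono)
        fix j assume j: "j \<in> {..<p}"
        have "\<bar>\<beta> j\<bar> + real (n j) \<le> (\<Sum>j<p. \<bar>\<beta> j\<bar> + real (n j))"
          using j by (intro member_le_sum) auto
        then have bj: "\<bar>\<beta> j\<bar> + real (n j) \<le> K" by (simp add: K_def)
        have "norm (complex_of_real (\<beta> j) - s) \<le> \<bar>\<beta> j\<bar> + norm s"
          using norm_triangle_ineq4[of "complex_of_real (\<beta> j)" s] by simp
        then have "norm (complex_of_real (\<beta> j) - s) + real (n j) \<le> K + M + u"
          using bj ns by linarith
        then have "(norm (complex_of_real (\<beta> j) - s) + real (n j)) ^ n j \<le> (K + M + u) ^ n j"
          by (intro power_mono) auto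
        then show "0 \<le> norm (pochhammer (complex_of_real (\<beta> j) - s) (n j)) \<and>
            norm (pochhammer (complex_of_real (\<beta> j) - s) (n j)) \<le> (K + M + u) ^ n j"
          using norm_poch_le[of "complex_of_real (\<beta> j) - s" "n j"] by simp
      qed
      also have "\<dots> = (K + M + u) ^ N" by (simp add: N_def power_sum)
      finally show ?thesis .
    qed
    have P3: "norm (complex_of_real (1 - c) powr s) = exp (lam * u)"
    proof -
      have "norm (complex_of_real (1 - c) powr s) = (1 - c) powr Re s"
        using c by (subst norm_powr_real_powr) auto
      also have "\<dots> = exp (lam * u)" using c by (simp add: powr_def lam_def u_def)
      finally show ?thesis .
    qed
    have B0: "0 \<le> (K + M + u) ^ N"
    proof -
      have "0 \<le> K" unfolding K_def by (intro add_nonneg_nonneg sum_nonneg) auto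
      then show ?thesis using M0 ux by simp
    qed
    have "norm (gfun p \<beta> c n x s) =
        norm (\<Prod>j<p. pochhammer (complex_of_real (\<beta> j) - s) (n j)) / (exp (lam * u) * norm (pochhammer s (Suc x)))"
      unfolding gfun_def hfun_def divide_divide_eq_left norm_divide norm_mult P3 ..
    also have "\<dots> \<le> norm (\<Prod>j<p. pochhammer (complex_of_real (\<beta> j) - s) (n j)) / exp (lam * u)"
      using P1 by (intro divide_left_mono) (auto intro!: mult_pos_pos)
    also have "\<dots> \<le> (K + M + u) ^ N / exp (lam * u)"
      using P2 by (intro divide_right_mono) auto
    also have "\<dots> = ((K + M + u) ^ N * exp (- (lam / 2) * u)) * exp (- (lam / 2) * u)"
      by (simp add: exp_minus field_simps flip: exp_add)
    also have "\<dots> \<le> 1 * exp (- (lam / 2) * u)"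
      using U[OF uU] by (intro mult_right_mono) auto
    also have "\<dots> = exp ((- ln (1 - c) / 2) * Re s)" by (simp add: lam_def u_def)
    finally show "norm (gfun p \<beta> c n x s) \<le> exp ((- ln (1 - c) / 2) * Re s)" .
  qed
qed


lemma exp_integral_01:
  fixes \<mu> A B :: real
  assumes mu: "\<mu> > 0"
  shows "((\<lambda>t. exp (\<mu> * (A + t * (B - A))) * \<bar>B - A\<bar>) has_integral
            \<bar>exp (\<mu> * B) - exp (\<mu> * A)\<bar> / \<mu>) {0..1}"
proof (cases "B = A")
  case True
  then show ?thesis by simp
next
  case False
  define F where "F t = exp (\<mu> * (A + t * (B - A))) * \<bar>B - A\<bar> / (\<mu> * (B - A))" for t
  have der: "(F has_vector_derivative exp (\<mu> * (A + t * (B - A))) * \<bar>B - A\<bar>) (at t within {0..1})" for t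
  proof -
    have "(F has_real_derivative exp (\<mu> * (A + t * (B - A))) * (\<mu> * (B - A)) * \<bar>B - A\<bar> / (\<mu> * (B - A))) (at t within {0..1})"
      unfolding F_def by (auto intro!: derivative_eq_intros)
    moreover have "exp (\<mu> * (A + t * (B - A))) * (\<mu> * (B - A)) * \<bar>B - A\<bar> / (\<mu> * (B - A))
        = exp (\<mu> * (A + t * (B - A))) * \<bar>B - A\<bar>"
      using False mu by simp
    ultimately show ?thesis by (simp add: has_real_derivative_iff_has_vector_derivative)
  qed
  have "((\<lambda>t. exp (\<mu> * (A + t * (B - A))) * \<bar>B - A\<bar>) has_integral F 1 - F 0) {0..1}"
    by (rule fundamental_theorem_of_calculus) (use der in auto)
  moreover have "F 1 - F 0 = \<bar>exp (\<mu> * B) - exp (\<mu> * A)\<bar> / \<mu>"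
  proof (cases "A < B")
    case True
    have Ft: "F t = exp (\<mu> * (A + t * (B - A))) / \<mu>" for t
      using True mu by (simp add: F_def)
    have "exp (\<mu> * A) < exp (\<mu> * B)" using mu True by simp
    then show ?thesis unfolding Ft by (simp add: diff_divide_distrib)
  next
    case False
    then have AB: "B < A" using \<open>B \<noteq> A\<close> by simp
    have Ft: "F t = - exp (\<mu> * (A + t * (B - A))) / \<mu>" for t
    proof -
      have e: "\<bar>B - A\<bar> = - (B - A)" using AB by simp
      have ab: "\<And>X D m :: real. D \<noteq> 0 \<Longrightarrow> m \<noteq> 0 \<Longrightarrow> X * (- D) / (m * D) = - X / m"
        by (simp add: field_simps)
      have "B - A \<noteq> 0" "\<mu> \<noteq> 0" using AB mu by auto
      from ab[OF this, of "exp (\<mu> * (A + t * (B - A)))"] show ?thesis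
        unfolding F_def e .
    qed
    have "exp (\<mu> * B) < exp (\<mu> * A)" using mu AB by simp
    then show ?thesis unfolding Ft by (simp add: diff_divide_distrib)
  qed
  ultimately show ?thesis by simp
qed

lemma seg_bound:
  fixes g :: "complex \<Rightarrow> complex" and \<mu> M R0 :: real
  assumes mu: "\<mu> > 0"
    and bnd: "\<And>s. Re s \<le> - R0 \<Longrightarrow> \<bar>Im s\<bar> \<le> M \<Longrightarrow> norm (g s) \<le> exp (\<mu> * Re s)"
    and a: "Re a \<le> - R0" "\<bar>Im a\<bar> \<le> M" and b: "Re b \<le> - R0" "\<bar>Im b\<bar> \<le> M"
    and int: "g contour_integrable_on linepath a b"
  shows "norm (contour_integral (linepath a b) g) \<le> (1 / \<mu> + 2 * M) * exp (\<mu> * max (Re a) (Re b))"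
proof -
  define A where "A = Re a"
  define B where "B = Re b"
  define E where "E = exp (\<mu> * max A B)"
  define \<psi> where "\<psi> t = exp (\<mu> * (A + t * (B - A))) * \<bar>B - A\<bar> + 2 * M * E" for t
  have M0: "M \<ge> 0" using a by linarith
  have hasI: "((\<lambda>t. g (linepath a b t) * (b - a)) has_integral contour_integral (linepath a b) g) {0..1}"
    using has_contour_integral_integral[OF int] has_contour_integral_linepath by blast
  have hasP: "(\<psi> has_integral (\<bar>exp (\<mu> * B) - exp (\<mu> * A)\<bar> / \<mu> + 2 * M * E)) {0..1}"
  proof -
    have "((\<lambda>t. 2 * M * E) has_integral (2 * M * E)) {0..1::real}"
      using has_integral_const_real[of "2 * M * E" "0::real" 1] by simp
    from has_integral_add[OF exp_integral_01[OF mu, of A B] this] show ?thesis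
      unfolding \<psi>_def by simp
  qed
  have pt: "norm (g (linepath a b t) * (b - a)) \<le> \<psi> t" if t: "t \<in> {0..1}" for t
  proof -
    have t0: "0 \<le> t" "t \<le> 1" using t by auto
    have re: "Re (linepath a b t) = (1 - t) * A + t * B"
      by (simp add: linepath_def A_def B_def)
    have re2: "Re (linepath a b t) = A + t * (B - A)" unfolding re by (simp add: algebra_simps)
    have im: "Im (linepath a b t) = (1 - t) * Im a + t * Im b" by (simp add: linepath_def)
    have reM: "Re (linepath a b t) \<le> max A B"
      unfolding re by (rule convex_bound_le) (use t0 in auto)
    have reR: "Re (linepath a b t) \<le> - R0"
      unfolding re by (rule convex_bound_le) (use t0 a b in \<open>auto simp: A_def B_def\<close>)
    have imM1: "Im (linepath a b t) \<le> M"
      unfolding im by (rule convex_bound_le) (use t0 a b in auto)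
    have imM2: "- Im (linepath a b t) \<le> M"
    proof -
      have "(1 - t) * (- Im a) + t * (- Im b) \<le> M"
        by (rule convex_bound_le) (use t0 a b in auto)
      then show ?thesis unfolding im by (simp add: algebra_simps)
    qed
    have imM: "\<bar>Im (linepath a b t)\<bar> \<le> M" using imM1 imM2 by linarith
    have ng: "norm (g (linepath a b t)) \<le> exp (\<mu> * (A + t * (B - A)))"
      using bnd[OF reR imM] unfolding re2 .
    have nba: "norm (b - a) \<le> \<bar>B - A\<bar> + 2 * M"
      using cmod_le[of "b - a"] a b by (simp add: A_def B_def)
    have eE: "exp (\<mu> * (A + t * (B - A))) \<le> E"
      unfolding E_def using reM mu re2 by simp
    have "norm (g (linepath a b t) * (b - a)) = norm (g (linepath a b t)) * norm (b - a)"
      by (simp add: norm_mult)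
    also have "\<dots> \<le> exp (\<mu> * (A + t * (B - A))) * (\<bar>B - A\<bar> + 2 * M)"
      using ng nba by (intro mult_mono) auto
    also have "\<dots> = exp (\<mu> * (A + t * (B - A))) * \<bar>B - A\<bar> + 2 * M * exp (\<mu> * (A + t * (B - A)))"
      by (simp add: algebra_simps)
    also have "\<dots> \<le> \<psi> t"
      unfolding \<psi>_def using eE M0 by (intro add_left_mono mult_left_mono) auto
    finally show ?thesis .
  qed
  have "norm (contour_integral (linepath a b) g) = norm (integral {0..1} (\<lambda>t. g (linepath a b t) * (b - a)))"
    using integral_unique[OF hasI] by simp
  also have "\<dots> \<le> integral {0..1} \<psi>"
    by (rule integral_norm_bound_integral) (use hasI hasP pt in \<open>auto intro: has_integral_integrable\<close>)
  also have "\<dots> = \<bar>exp (\<mu> * B) - exp (\<mu> * A)\<bar> / \<mu> + 2 * M * E"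
    using integral_unique[OF hasP] .
  also have "\<dots> \<le> E / \<mu> + 2 * M * E"
  proof -
    have "exp (\<mu> * A) \<le> E" "exp (\<mu> * B) \<le> E" using mu by (auto simp: E_def)
    moreover have "0 < exp (\<mu> * A)" "0 < exp (\<mu> * B)" by auto
    ultimately have "\<bar>exp (\<mu> * B) - exp (\<mu> * A)\<bar> \<le> E" by linarith
    then show ?thesis using mu by (simp add: divide_right_mono)
  qed
  also have "\<dots> = (1 / \<mu> + 2 * M) * exp (\<mu> * max (Re a) (Re b))"
    by (simp add: E_def A_def B_def algebra_simps)
  finally show ?thesis .
qed


lemma re_ev:
  fixes \<gamma> :: "real \<Rightarrow> complex"
  assumes l1: "filterlim (\<lambda>t. Re (\<gamma> t)) at_bot at_top"
    and l2: "filterlim (\<lambda>t. Re (\<gamma> t)) at_bot at_bot"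
  shows "eventually (\<lambda>T. Re (\<gamma> T) \<le> Z \<and> Re (\<gamma> (- T)) \<le> Z) at_top"
proof -
  have e1: "eventually (\<lambda>T. Re (\<gamma> T) \<le> Z) at_top" using l1 by (simp add: filterlim_at_bot)
  have "eventually (\<lambda>t. Re (\<gamma> t) \<le> Z) at_bot" using l2 by (simp add: filterlim_at_bot)
  then have "\<exists>N. \<forall>t\<le>N. Re (\<gamma> t) \<le> Z" by (simp only: eventually_at_bot_linorder)
  then obtain N0 where N0: "\<And>t. t \<le> N0 \<Longrightarrow> Re (\<gamma> t) \<le> Z" by blast
  have e2: "eventually (\<lambda>T. Re (\<gamma> (- T)) \<le> Z) at_top"
    using eventually_ge_at_top[of "- N0"] by eventually_elim (auto intro: N0)
  from e1 e2 show ?thesis by eventually_elim auto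
qed

lemma nonpos_Ints_sub: "z \<in> \<int>\<^sub>\<le>\<^sub>0 \<Longrightarrow> (z::complex) \<in> complex_of_real ` {..0}"
  by (elim nonpos_Ints_cases) (auto intro!: image_eqI[of _ _ "real_of_int _"])

lemma pts_sub: "pts x \<subseteq> complex_of_real ` {..0}"
  by (auto simp: pts_def intro!: image_eqI[of _ _ "- real _"])

lemma partA:
  assumes c: "0 < c" "c < 1" and \<gamma>: "hankel_contour \<gamma>"
  shows "((\<lambda>T. contour_integral (hankel_piece \<gamma> T)
                 (\<lambda>s. Gamma s / (complex_of_real (1 - c)) powr s
                      * (\<Prod>j<p. pochhammer (complex_of_real (\<beta> j) - s) (n j))
                      / Gamma (of_nat x + s + 1))) \<longlongrightarrow>
          complex_of_real (2 * pi) * \<i> * (\<Sum>k\<le>x. hfun p \<beta> c n (- of_nat k) / ((-1) ^ k * fact k * fact (x - k)))) at_top"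
proof -
  define f where "f = (\<lambda>s. Gamma s / (complex_of_real (1 - c)) powr s
                      * (\<Prod>j<p. pochhammer (complex_of_real (\<beta> j) - s) (n j))
                      / Gamma (of_nat x + s + 1))"
  define g where "g = gfun p \<beta> c n x"
  define S where "S = (\<Sum>k\<le>x. hfun p \<beta> c n (- of_nat k) / ((-1) ^ k * fact k * fact (x - k)))"
  define \<mu> where "\<mu> = - ln (1 - c) / 2"
  have mu: "\<mu> > 0" using c by (simp add: \<mu>_def)
  have valid: "\<And>T. T > 0 \<Longrightarrow> valid_path (hankel_piece \<gamma> T)"
    and avoid: "\<And>t. \<gamma> t \<notin> complex_of_real ` {..0}"
    and l1: "filterlim (\<lambda>t. Re (\<gamma> t)) at_bot at_top"
    and l2: "filterlim (\<lambda>t. Re (\<gamma> t)) at_bot at_bot"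
    and bdd: "bounded (range (\<lambda>t. Im (\<gamma> t)))"
    and wind: "\<And>z::real. z \<le> 0 \<Longrightarrow> eventually (\<lambda>T. winding_number (hankel_piece \<gamma> T +++ linepath (\<gamma> T) (\<gamma> (-T)))
                         (complex_of_real z) = 1) at_top"
    using \<gamma> unfolding hankel_contour_def by auto
  obtain M where M: "\<And>t. \<bar>Im (\<gamma> t)\<bar> \<le> M"
    using bdd unfolding bounded_iff by auto
  obtain R0 where R0: "\<And>s. Re s \<le> - R0 \<Longrightarrow> \<bar>Im s\<bar> \<le> M \<Longrightarrow> norm (g s) \<le> exp (\<mu> * Re s)"
    using gfun_bound[OF c, of M p \<beta> n x] unfolding g_def \<mu>_def by blast
  define D where "D = max R0 (real x + 1)"
  have bndD: "\<And>s. Re s \<le> - D \<Longrightarrow> \<bar>Im s\<bar> \<le> M \<Longrightarrow> norm (g s) \<le> exp (\<mu> * Re s)"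
    using R0 by (auto simp: D_def)
  have ghol: "g holomorphic_on (UNIV - pts x)" unfolding g_def by (rule gfun_holo[OF c(2)])
  have evw: "eventually (\<lambda>T. \<forall>k\<in>{..x}. winding_number (hankel_piece \<gamma> T +++ linepath (\<gamma> T) (\<gamma> (-T)))
                         (- of_nat k) = 1) at_top"
    by (rule eventually_ball_finite) (use wind[of "- real _"] in auto)
  define B where "B T = (1 / \<mu> + 2 * M) * exp (\<mu> * max (Re (\<gamma> T)) (Re (\<gamma> (- T))))" for T
  have key: "eventually (\<lambda>T. contour_integral (hankel_piece \<gamma> T) f
       = complex_of_real (2 * pi) * \<i> * S - contour_integral (linepath (\<gamma> T) (\<gamma> (-T))) g
       \<and> norm (contour_integral (linepath (\<gamma> T) (\<gamma> (-T))) g) \<le> B T) at_top"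
    using evw re_ev[OF l1 l2, of "- D"] eventually_gt_at_top[of 0]
  proof eventually_elim
    case (elim T)
    then have w1: "\<And>k. k \<le> x \<Longrightarrow> winding_number (hankel_piece \<gamma> T +++ linepath (\<gamma> T) (\<gamma> (-T))) (- of_nat k) = 1"
      and r1: "Re (\<gamma> T) \<le> - D" and r2: "Re (\<gamma> (- T)) \<le> - D" and T0: "T > 0" by auto
    define pc where "pc = hankel_piece \<gamma> T"
    define sg where "sg = linepath (\<gamma> T) (\<gamma> (-T))"
    have vpc: "valid_path pc" using valid[OF T0] by (simp add: pc_def)
    have vsg: "valid_path sg" by (simp add: sg_def)
    have pfin: "pathfinish pc = \<gamma> T" by (simp add: pc_def pathfinish_def hankel_piece_def)
    have pst: "pathstart pc = \<gamma> (- T)" by (simp add: pc_def pathstart_def hankel_piece_def)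
    have imgpc: "path_image pc \<subseteq> range \<gamma>" by (auto simp: pc_def path_image_def hankel_piece_def)
    have pcpts: "path_image pc \<subseteq> UNIV - pts x"
      using imgpc avoid pts_sub by blast
    have imgsg: "path_image sg \<subseteq> {s. Re s \<le> - D}"
      unfolding sg_def path_image_linepath
      by (rule closed_segment_subset) (use r1 r2 convex_halfspace_Re_le in auto)
    have sgpts: "path_image sg \<subseteq> UNIV - pts x"
    proof -
      have "Re z > - D" if "z \<in> pts x" for z
        using that by (auto simp: pts_def D_def)
      then show ?thesis using imgsg by force
    qed
    have ipc: "g contour_integrable_on pc"
      by (rule contour_integrable_holomorphic_simple[OF ghol open_pts vpc pcpts])
    have isg: "g contour_integrable_on sg"
      by (rule contour_integrable_holomorphic_simple[OF ghol open_pts vsg sgpts])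
    have vL: "valid_path (pc +++ sg)" using vpc vsg pfin by (simp add: sg_def)
    have cL: "pathfinish (pc +++ sg) = pathstart (pc +++ sg)" using pst by (simp add: sg_def)
    have iL: "path_image (pc +++ sg) \<subseteq> UNIV - pts x"
      using path_image_join_subset[of pc sg] pcpts sgpts by blast
    have "contour_integral (pc +++ sg) g
        = complex_of_real (2 * pi) * \<i> * (\<Sum>q\<in>pts x. winding_number (pc +++ sg) q * residue g q)"
      by (rule Residue_theorem[OF open_UNIV connected_UNIV finite_pts ghol vL cL iL]) auto
    also have "(\<Sum>q\<in>pts x. winding_number (pc +++ sg) q * residue g q)
        = (\<Sum>k\<le>x. winding_number (pc +++ sg) (- of_nat k) * residue g (- of_nat k))"
      unfolding pts_def by (subst sum.reindex) (auto simp: inj_on_def)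
    also have "\<dots> = S"
      unfolding S_def g_def
      by (intro sum.cong refl) (use w1 residue_gfun[OF c(2)] in \<open>auto simp: pc_def sg_def\<close>)
    finally have RT: "contour_integral pc g + contour_integral sg g = complex_of_real (2 * pi) * \<i> * S"
      using ipc isg vpc vsg by simp
    have fg: "contour_integral pc f = contour_integral pc g"
    proof (rule contour_integral_eq)
      fix s assume "s \<in> path_image pc"
      then obtain t where "s = \<gamma> t" using imgpc by blast
      then have "s \<notin> complex_of_real ` {..0}" using avoid by simp
      then have "s \<notin> \<int>\<^sub>\<le>\<^sub>0" using nonpos_Ints_sub by blast
      then show "f s = g s" unfolding f_def g_def by (rule integrand_eq)
    qed
    have nb: "norm (contour_integral sg g) \<le> B T"
      unfolding sg_def B_def
      by (rule seg_bound[OF mu bndD r1 M r2 M isg[unfolded sg_def]])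
    show ?case using fg RT nb by (auto simp: pc_def sg_def algebra_simps)
  qed
  have Blim: "(B \<longlongrightarrow> 0) at_top"
  proof -
    have "filterlim (\<lambda>T. \<mu> * max (Re (\<gamma> T)) (Re (\<gamma> (- T)))) at_bot at_top"
      unfolding filterlim_at_bot
    proof
      fix Z
      show "eventually (\<lambda>T. \<mu> * max (Re (\<gamma> T)) (Re (\<gamma> (- T))) \<le> Z) at_top"
        using re_ev[OF l1 l2, of "Z / \<mu>"]
        by eventually_elim (use mu in \<open>auto simp: field_simps\<close>)
    qed
    from filterlim_compose[OF exp_at_bot this]
    have "((\<lambda>T. exp (\<mu> * max (Re (\<gamma> T)) (Re (\<gamma> (- T))))) \<longlongrightarrow> 0) at_top" .
    then show ?thesis unfolding B_def by (rule tendsto_mult_right_zero)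
  qed
  have seg0: "((\<lambda>T. contour_integral (linepath (\<gamma> T) (\<gamma> (-T))) g) \<longlongrightarrow> 0) at_top"
    by (rule Lim_null_comparison[OF _ Blim]) (use key in \<open>eventually_elim, auto\<close>)
  have "((\<lambda>T. complex_of_real (2 * pi) * \<i> * S - contour_integral (linepath (\<gamma> T) (\<gamma> (-T))) g)
        \<longlongrightarrow> complex_of_real (2 * pi) * \<i> * S - 0) at_top"
    by (intro tendsto_diff tendsto_const seg0)
  then have "((\<lambda>T. complex_of_real (2 * pi) * \<i> * S - contour_integral (linepath (\<gamma> T) (\<gamma> (-T))) g)
        \<longlongrightarrow> complex_of_real (2 * pi) * \<i> * S) at_top" by simp
  then have "((\<lambda>T. contour_integral (hankel_piece \<gamma> T) f) \<longlongrightarrow> complex_of_real (2 * pi) * \<i> * S) at_top"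
    by (rule Lim_transform_eventually) (use key in \<open>eventually_elim, auto\<close>)
  then show ?thesis unfolding f_def S_def .
qed


theorem mainTheorem7:
  fixes p :: nat and \<beta> :: "nat \<Rightarrow> real" and c :: real and n :: "nat \<Rightarrow> nat"
    and P :: "real poly" and \<gamma> :: "real \<Rightarrow> complex" and x :: nat
  assumes c: "0 < c" "c < 1"
    and \<beta>pos: "\<And>i. i < p \<Longrightarrow> \<beta> i > 0"
    and \<beta>nonint: "\<And>i j. i < p \<Longrightarrow> j < p \<Longrightarrow> i \<noteq> j \<Longrightarrow> \<beta> i - \<beta> j \<notin> \<int>"
    and P: "is_meixner2_typeII p \<beta> c n P"
    and \<gamma>: "hankel_contour \<gamma>"
  shows "\<exists>I. ((\<lambda>T. contour_integral (hankel_piece \<gamma> T)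
                 (\<lambda>s. Gamma s / (complex_of_real (1 - c)) powr s
                      * (\<Prod>j<p. pochhammer (complex_of_real (\<beta> j) - s) (n j))
                      / Gamma (of_nat x + s + 1))) \<longlongrightarrow> I) at_top
           \<and> complex_of_real (poly P (real x))
               = (complex_of_real c / (complex_of_real c - 1)) ^ (\<Sum>i<p. n i)
                 * complex_of_real (Gamma (real x + 1) / c ^ x) * I / (2 * complex_of_real pi * \<i>)"
proof -
  define Q where "Q k = (\<Prod>j<p. pochhammer (\<beta> j + real k) (n j))" for k :: nat
  define Sr where "Sr = (\<Sum>k\<le>x. Q k * (c - 1) ^ k / (fact k * fact (x - k)))"
  define S where "S = (\<Sum>k\<le>x. hfun p \<beta> c n (- of_nat k) / ((-1) ^ k * fact k * fact (x - k)))"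
  have SS: "S = complex_of_real Sr"
    unfolding S_def Sr_def of_real_sum
  proof (intro sum.cong refl)
    fix k assume "k \<in> {..x}"
    have den: "((-1) ^ k * fact k * fact (x - k) :: complex) = complex_of_real ((-1) ^ k * fact k * fact (x - k))"
      by simp
    have "(1 - c) ^ k = (-1) ^ k * (c - 1) ^ k"
      using power_minus[of "c - 1" k] by simp
    then have r: "Q k * (1 - c) ^ k / ((-1) ^ k * fact k * fact (x - k)) = Q k * (c - 1) ^ k / (fact k * fact (x - k))"
      by (simp add: power_minus_mult)
    show "hfun p \<beta> c n (- of_nat k) / ((-1) ^ k * fact k * fact (x - k))
        = complex_of_real (Q k * (c - 1) ^ k / (fact k * fact (x - k)))"
      unfolding hfun_at[OF c(2)] den of_real_divide[symmetric] Q_def[symmetric] r ..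
  qed
  have lim: "((\<lambda>T. contour_integral (hankel_piece \<gamma> T)
                 (\<lambda>s. Gamma s / (complex_of_real (1 - c)) powr s
                      * (\<Prod>j<p. pochhammer (complex_of_real (\<beta> j) - s) (n j))
                      / Gamma (of_nat x + s + 1))) \<longlongrightarrow> complex_of_real (2 * pi) * \<i> * S) at_top"
    unfolding S_def by (rule partA[OF c \<gamma>])
  have B: "poly P (real x) = (c / (c - 1)) ^ (\<Sum>i<p. n i) * (fact x / c ^ x) * Sr"
    unfolding Sr_def Q_def by (rule partB[OF c \<beta>pos \<beta>nonint P])
  have G: "Gamma (real x + 1) = fact x" using Gamma_fact[of x] by (simp add: add.commute)
  have div: "complex_of_real (2 * pi) * \<i> * S / (2 * complex_of_real pi * \<i>) = S"
    by (simp add: field_simps)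
  show ?thesis
  proof (intro exI conjI)
    show "((\<lambda>T. contour_integral (hankel_piece \<gamma> T)
                 (\<lambda>s. Gamma s / (complex_of_real (1 - c)) powr s
                      * (\<Prod>j<p. pochhammer (complex_of_real (\<beta> j) - s) (n j))
                      / Gamma (of_nat x + s + 1))) \<longlongrightarrow> complex_of_real (2 * pi) * \<i> * S) at_top"
      by (rule lim)
    have "(complex_of_real c / (complex_of_real c - 1)) ^ (\<Sum>i<p. n i)
          * complex_of_real (Gamma (real x + 1) / c ^ x) * (complex_of_real (2 * pi) * \<i> * S) / (2 * complex_of_real pi * \<i>)
        = (complex_of_real c / (complex_of_real c - 1)) ^ (\<Sum>i<p. n i)
          * complex_of_real (Gamma (real x + 1) / c ^ x) * (complex_of_real (2 * pi) * \<i> * S / (2 * complex_of_real pi * \<i>))"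
      by simp
    also have "\<dots> = complex_of_real ((c / (c - 1)) ^ (\<Sum>i<p. n i) * (fact x / c ^ x) * Sr)"
      unfolding div SS G by simp
    also have "\<dots> = complex_of_real (poly P (real x))" by (simp only: B)
    finally show "complex_of_real (poly P (real x))
               = (complex_of_real c / (complex_of_real c - 1)) ^ (\<Sum>i<p. n i)
                 * complex_of_real (Gamma (real x + 1) / c ^ x) * (complex_of_real (2 * pi) * \<i> * S) / (2 * complex_of_real pi * \<i>)"
      by simp
  qed
qed

end
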